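(* Let $n\ge 2$, $d\ge 2$, let $\{1,\dots,n\}=\beta\,\dot\cup\,\overline{\beta}$ be a bipartition into nonempty sets with $k_1=|\beta|$, $k_2=|\overline{\beta}|$ (so $k_1+k_2=n$), and let $x$ be an integer. For every state $\rho$ on $(\mathbb{C}^d)^{\otimes n}$ that is separable with respect to the bipartition $(\beta|\overline{\beta})$, $$\mathcal{C}_x(\rho)\le (d^{k_1}-1)(d^{k_2}-1)+\sum_{j\in\{1,2\}:\,k_j\ge x}(d^{k_j}-1).$$
   Context: Consider $n$ qudits with Hilbert space $(\mathbb{C}^d)^{\otimes n}$. Let $\lambda_0=\mathbb{1}_d$ and let $\lambda_1,\dots,\lambda_{d^2-1}$ be Hermitian traceless $d\times d$ matrices normalized so that $\mathrm{Tr}[\lambda_i\lambda_j]=d\,\delta_{ij}$. For a nonempty subset $\alpha\subseteq\{1,\dots,n\}$ and a state $\rho$ with reduced state $\rho_\alpha$, define $\|\tau_\alpha(\rho)\|^2=\sum_{(i_k)_{k\in\alpha}\in\{1,\dots,d^2-1\}^{\alpha}}\big(\mathrm{Tr}[\rho_\alpha\bigotimes_{k\in\alpha}\lambda_{i_k}]\big)^2$. For a real number $x$ define $\mathcal{C}_x(\rho)=\sum_{\alpha\neq\emptyset,\ |\alpha|\ge x}\|\tau_\alpha(\rho)\|^2$. A state is separable with respect to the bipartition $(\beta|\overline{\beta})$ if it is a convex combination of pure states of the form $|\phi\rangle_\beta\otimes|\chi\rangle_{\overline{\beta}}$. *)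

theory Defs
  imports "HOL-Analysis.Analysis" "HOL-Library.FuncSet"
begin

text \<open>A computational-basis configuration on a set A of sites is an
 element of the extensional function space A -> {..<d}. Operators on the tensor product over the sites in A are
 functions on pairs of configurations.\<close>

type_synonym cfg = "nat \<Rightarrow> nat"
type_synonym op = "cfg \<Rightarrow> cfg \<Rightarrow> complex"

definition cfgs :: "nat \<Rightarrow> nat set \<Rightarrow> cfg set" where
  "cfgs d A = A \<rightarrow>\<^sub>E {..<d}"

definition merge :: "nat set \<Rightarrow> cfg \<Rightarrow> cfg \<Rightarrow> cfg" where
  "merge A s u = (\<lambda>i. if i \<in> A then s i else u i)"

text \<open>Generalized Gell-Mann type operator basis: lam i is a d x d matrix
 (entries lam i a b for a, b < d).\<close>
definition op_basis :: "nat \<Rightarrow> (nat \<Rightarrow> nat \<Rightarrow> nat \<Rightarrow> complex) \<Rightarrow> bool" where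
  "op_basis d lam \<longleftrightarrow>
     (\<forall>a<d. \<forall>b<d. lam 0 a b = (if a = b then 1 else 0)) \<and>
     (\<forall>i\<in>{1..<d^2}. (\<forall>a<d. \<forall>b<d. lam i a b = cnj (lam i b a)) \<and>
                      (\<Sum>a<d. lam i a a) = 0) \<and>
     (\<forall>i\<in>{1..<d^2}. \<forall>j\<in>{1..<d^2}.
        (\<Sum>a<d. \<Sum>b<d. lam i a b * lam j b a) = (if i = j then of_nat d else 0))"

definition is_state :: "nat \<Rightarrow> nat \<Rightarrow> op \<Rightarrow> bool" where
  "is_state d n \<rho> \<longleftrightarrow>
     (\<forall>s\<in>cfgs d {1..n}. \<forall>t\<in>cfgs d {1..n}. \<rho> s t = cnj (\<rho> t s)) \<and>
     (\<Sum>s\<in>cfgs d {1..n}. \<rho> s s) = 1 \<and>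
     (\<forall>v :: cfg \<Rightarrow> complex.
        0 \<le> Re (\<Sum>s\<in>cfgs d {1..n}. \<Sum>t\<in>cfgs d {1..n}. cnj (v s) * \<rho> s t * v t))"

definition separable :: "nat \<Rightarrow> nat \<Rightarrow> nat set \<Rightarrow> op \<Rightarrow> bool" where
  "separable d n \<beta> \<rho> \<longleftrightarrow>
     (\<exists>(m::nat) (p::nat \<Rightarrow> real) (\<phi>::nat \<Rightarrow> cfg \<Rightarrow> complex) (chi::nat \<Rightarrow> cfg \<Rightarrow> complex).
        (\<forall>i<m. p i \<ge> 0) \<and> (\<Sum>i<m. p i) = 1 \<and>
        (\<forall>i<m. (\<Sum>s\<in>cfgs d \<beta>. (cmod (\<phi> i s))^2) = 1) \<and>
        (\<forall>i<m. (\<Sum>s\<in>cfgs d ({1..n} - \<beta>). (cmod (chi i s))^2) = 1) \<and>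
        (\<forall>s\<in>cfgs d {1..n}. \<forall>t\<in>cfgs d {1..n}.
           \<rho> s t = (\<Sum>i<m. complex_of_real (p i) *
              (\<phi> i (restrict s \<beta>) * chi i (restrict s ({1..n} - \<beta>))) *
              cnj (\<phi> i (restrict t \<beta>) * chi i (restrict t ({1..n} - \<beta>))))))"

definition reduced :: "nat \<Rightarrow> nat \<Rightarrow> op \<Rightarrow> nat set \<Rightarrow> op" where
  "reduced d n \<rho> \<alpha> s t = (\<Sum>u\<in>cfgs d ({1..n} - \<alpha>). \<rho> (merge \<alpha> s u) (merge \<alpha> t u))"

definition expval :: "nat \<Rightarrow> nat \<Rightarrow> (nat \<Rightarrow> nat \<Rightarrow> nat \<Rightarrow> complex) \<Rightarrow> op \<Rightarrow> nat set \<Rightarrow> (nat \<Rightarrow> nat) \<Rightarrow> complex" where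
  "expval d n lam \<rho> \<alpha> idx =
     (\<Sum>s\<in>cfgs d \<alpha>. \<Sum>t\<in>cfgs d \<alpha>. reduced d n \<rho> \<alpha> s t * (\<Prod>k\<in>\<alpha>. lam (idx k) (t k) (s k)))"

text \<open>||\<tau>_\<alpha>(\<rho>)||^2 (the expectation values are real since the \<lambda>_i are Hermitian).\<close>
definition tau_norm_sq :: "nat \<Rightarrow> nat \<Rightarrow> (nat \<Rightarrow> nat \<Rightarrow> nat \<Rightarrow> complex) \<Rightarrow> op \<Rightarrow> nat set \<Rightarrow> real" where
  "tau_norm_sq d n lam \<rho> \<alpha> = (\<Sum>idx\<in>\<alpha> \<rightarrow>\<^sub>E {1..<d^2}. (Re (expval d n lam \<rho> \<alpha> idx))^2)"

definition C_x :: "nat \<Rightarrow> nat \<Rightarrow> (nat \<Rightarrow> nat \<Rightarrow> nat \<Rightarrow> complex) \<Rightarrow> real \<Rightarrow> op \<Rightarrow> real" where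
  "C_x d n lam x \<rho> = (\<Sum>\<alpha>\<in>{\<alpha>. \<alpha> \<subseteq> {1..n} \<and> \<alpha> \<noteq> {} \<and> real (card \<alpha>) \<ge> x}. tau_norm_sq d n lam \<rho> \<alpha>)"

end

theory Submission
  imports Defs
begin

lemma finite_cfgs[simp]: "finite A \<Longrightarrow> finite (cfgs d A)"
  by (simp add: cfgs_def finite_PiE)

lemma merge_in_cfgs:
  assumes "s \<in> cfgs d A" "u \<in> cfgs d C"
  shows "merge A s u \<in> cfgs d (A \<union> C)"
  using assms by (auto simp: cfgs_def merge_def PiE_def Pi_def extensional_def)

lemma bij_merge:
  assumes "A \<inter> C = {}"
  shows "bij_betw (\<lambda>(s,u). merge A s u) (cfgs d A \<times> cfgs d C) (cfgs d (A \<union> C))"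
proof (rule bij_betw_imageI)
  show "inj_on (\<lambda>(s, u). merge A s u) (cfgs d A \<times> cfgs d C)"
  proof (rule inj_onI, clarify)
    fix s u s' u'
    assume h: "s \<in> cfgs d A" "u \<in> cfgs d C" "s' \<in> cfgs d A" "u' \<in> cfgs d C"
      "merge A s u = merge A s' u'"
    have "s = s'"
    proof
      fix k
      have e: "merge A s u k = merge A s' u' k" using h(5) by simp
      show "s k = s' k"
      proof (cases "k \<in> A")
        case True then show ?thesis using e by (simp add: merge_def)
      next
        case False then show ?thesis using h(1,3) by (simp add: cfgs_def PiE_def extensional_def)
      qed
    qed
    moreover have "u = u'"
    proof
      fix k
      have e: "merge A s u k = merge A s' u' k" using h(5) by simp
      show "u k = u' k"
      proof (cases "k \<in> C")
        case True then have "k \<notin> A" using assms by auto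
        then show ?thesis using e by (simp add: merge_def)
      next
        case False then show ?thesis using h(2,4) by (simp add: cfgs_def PiE_def extensional_def)
      qed
    qed
    ultimately show "s = s' \<and> u = u'" by simp
  qed
  show "(\<lambda>(s, u). merge A s u) ` (cfgs d A \<times> cfgs d C) = cfgs d (A \<union> C)"
  proof
    show "(\<lambda>(s, u). merge A s u) ` (cfgs d A \<times> cfgs d C) \<subseteq> cfgs d (A \<union> C)"
      using merge_in_cfgs by auto
    show "cfgs d (A \<union> C) \<subseteq> (\<lambda>(s, u). merge A s u) ` (cfgs d A \<times> cfgs d C)"
    proof
      fix S assume S: "S \<in> cfgs d (A \<union> C)"
      have eq: "merge A (restrict S A) (restrict S C) = S"
        using S assms by (auto simp: merge_def cfgs_def PiE_def extensional_def fun_eq_iff)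
      moreover have "restrict S A \<in> cfgs d A" "restrict S C \<in> cfgs d C"
        using S by (auto simp: cfgs_def)
      ultimately show "S \<in> (\<lambda>(s, u). merge A s u) ` (cfgs d A \<times> cfgs d C)"
        by (metis (mono_tags) SigmaI case_prod_conv image_eqI)
    qed
  qed
qed

lemma sum_cfgs_split:
  assumes "A \<inter> C = {}"
  shows "(\<Sum>S\<in>cfgs d (A \<union> C). g S) = (\<Sum>s\<in>cfgs d A. \<Sum>u\<in>cfgs d C. g (merge A s u))"
proof -
  have "(\<Sum>S\<in>cfgs d (A \<union> C). g S) = (\<Sum>x\<in>cfgs d A \<times> cfgs d C. g ((\<lambda>(s,u). merge A s u) x))"
    using sum.reindex_bij_betw[OF bij_merge[OF assms], of g] by simp
  also have "\<dots> = (\<Sum>x\<in>cfgs d A \<times> cfgs d C. case x of (s,u) \<Rightarrow> g (merge A s u))"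
    by (rule sum.cong) auto
  also have "\<dots> = (\<Sum>s\<in>cfgs d A. \<Sum>u\<in>cfgs d C. g (merge A s u))"
    by (simp add: sum.cartesian_product)
  finally show ?thesis .
qed

lemma restrict_merge1: "s \<in> cfgs d A \<Longrightarrow> restrict (merge A s u) A = s"
  by (auto simp: merge_def cfgs_def PiE_def extensional_def fun_eq_iff)

lemma restrict_merge2: "u \<in> cfgs d C \<Longrightarrow> A \<inter> C = {} \<Longrightarrow> restrict (merge A s u) C = u"
  by (auto simp: merge_def cfgs_def PiE_def extensional_def fun_eq_iff)

lemma merge_A: "k \<in> A \<Longrightarrow> merge A s u k = s k" by (simp add: merge_def)
lemma merge_C: "k \<notin> A \<Longrightarrow> merge A s u k = u k" by (simp add: merge_def)

lemma cfgs_lt: "s \<in> cfgs d A \<Longrightarrow> k \<in> A \<Longrightarrow> s k < d"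
  by (auto simp: cfgs_def)

lemma cfgs_eqI: "s \<in> cfgs d A \<Longrightarrow> t \<in> cfgs d A \<Longrightarrow> (\<And>k. k \<in> A \<Longrightarrow> s k = t k) \<Longrightarrow> s = t"
  unfolding cfgs_def by (rule PiE_ext)

lemma lam0: "op_basis d lam \<Longrightarrow> a < d \<Longrightarrow> b < d \<Longrightarrow> lam 0 a b = (if a = b then 1 else 0)"
  unfolding op_basis_def by blast

lemma lam_herm:
  assumes "op_basis d lam" "i < d^2" "a < d" "b < d"
  shows "lam i a b = cnj (lam i b a)"
proof (cases "i = 0")
  case True thus ?thesis using assms lam0[OF assms(1)] by simp
next
  case False
  then have "i \<in> {1..<d^2}" using assms by auto
  thus ?thesis using assms(1,3,4) unfolding op_basis_def by blast
qed

lemma lam_trace: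
  assumes "op_basis d lam" "i \<in> {1..<d^2}"
  shows "(\<Sum>a<d. lam i a a) = 0"
  using assms unfolding op_basis_def by blast

lemma lam_orth:
  assumes "op_basis d lam" "i < d^2" "j < d^2"
  shows "(\<Sum>a<d. \<Sum>b<d. lam i a b * lam j b a) = (if i = j then of_nat d else 0)"
proof -
  have ex: "\<And>f. (\<Sum>a<d. \<Sum>b<d. (if a = b then 1 else 0) * f a b) = (\<Sum>a<d. f a a :: complex)"
  proof (rule sum.cong[OF refl])
    fix f :: "nat \<Rightarrow> nat \<Rightarrow> complex" and a assume "a \<in> {..<d}"
    have "(\<Sum>b<d. (if a = b then 1 else 0) * f a b) = (\<Sum>b<d. (if a = b then f a b else 0))"
      by (rule sum.cong) auto
    thus "(\<Sum>b<d. (if a = b then 1 else 0) * f a b) = f a a" using \<open>a \<in> {..<d}\<close> by simp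
  qed
  have ex2: "\<And>f. (\<Sum>a<d. \<Sum>b<d. f a b * (if b = a then 1 else 0)) = (\<Sum>a<d. f a a :: complex)"
  proof (rule sum.cong[OF refl])
    fix f :: "nat \<Rightarrow> nat \<Rightarrow> complex" and a assume "a \<in> {..<d}"
    have "(\<Sum>b<d. f a b * (if b = a then 1 else 0)) = (\<Sum>b<d. (if a = b then f a b else 0))"
      by (rule sum.cong) auto
    thus "(\<Sum>b<d. f a b * (if b = a then 1 else 0)) = f a a" using \<open>a \<in> {..<d}\<close> by simp
  qed
  show ?thesis
  proof (cases "i = 0")
    case i: True
    show ?thesis
    proof (cases "j = 0")
      case True
      have "(\<Sum>a<d. \<Sum>b<d. lam i a b * lam j b a) = (\<Sum>a<d. \<Sum>b<d. (if a = b then 1 else 0) * (if b = a then 1 else 0) :: complex)"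
        using assms i True by (intro sum.cong refl) (simp add: lam0[OF assms(1)])
      also have "\<dots> = of_nat d" using ex[of "\<lambda>a b. (if b = a then 1 else 0)"] by simp
      finally show ?thesis using i True by simp
    next
      case False
      have "(\<Sum>a<d. \<Sum>b<d. lam i a b * lam j b a) = (\<Sum>a<d. \<Sum>b<d. (if a = b then 1 else 0) * lam j b a)"
        using assms i by (intro sum.cong refl) (simp add: lam0[OF assms(1)])
      also have "\<dots> = (\<Sum>a<d. lam j a a)" using ex[of "\<lambda>a b. lam j b a"] by simp
      also have "\<dots> = 0" using lam_trace[OF assms(1), of j] False assms by simp
      finally show ?thesis using i False by simp
    qed
  next
    case i: False
    show ?thesis
    proof (cases "j = 0")
      case True
      have "(\<Sum>a<d. \<Sum>b<d. lam i a b * lam j b a) = (\<Sum>a<d. \<Sum>b<d. lam i a b * (if b = a then 1 else 0))"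
        using assms True by (intro sum.cong refl) (simp add: lam0[OF assms(1)])
      also have "\<dots> = (\<Sum>a<d. lam i a a)" using ex2[of "\<lambda>a b. lam i a b"] by simp
      also have "\<dots> = 0" using lam_trace[OF assms(1), of i] i assms by simp
      finally show ?thesis using i True by simp
    next
      case False
      have o3: "\<forall>i\<in>{1..<d^2}. \<forall>j\<in>{1..<d^2}.
        (\<Sum>a<d. \<Sum>b<d. lam i a b * lam j b a) = (if i = j then of_nat d else 0)"
        using assms(1) unfolding op_basis_def by (elim conjE)
      have "i \<in> {1..<d^2}" "j \<in> {1..<d^2}" using assms i False by auto
      thus ?thesis using o3 by blast
    qed
  qed
qed

definition Lam :: "(nat \<Rightarrow> nat \<Rightarrow> nat \<Rightarrow> complex) \<Rightarrow> nat set \<Rightarrow> (nat \<Rightarrow> nat) \<Rightarrow> cfg \<Rightarrow> cfg \<Rightarrow> complex" where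
  "Lam lam B J s t = (\<Prod>k\<in>B. lam (J k) (s k) (t k))"

definition FF :: "nat \<Rightarrow> (nat \<Rightarrow> nat \<Rightarrow> nat \<Rightarrow> complex) \<Rightarrow> nat set \<Rightarrow> (cfg \<Rightarrow> complex) \<Rightarrow> (nat \<Rightarrow> nat) \<Rightarrow> complex" where
  "FF d lam B v J = (\<Sum>s\<in>cfgs d B. \<Sum>t\<in>cfgs d B. v s * cnj (v t) * Lam lam B J t s)"

lemma Lam_herm:
  assumes "op_basis d lam" "J \<in> cfgs (d^2) B" "s \<in> cfgs d B" "t \<in> cfgs d B"
  shows "Lam lam B J t s = cnj (Lam lam B J s t)"
  unfolding Lam_def cnj_prod
proof (rule prod.cong[OF refl])
  fix k assume k: "k \<in> B"
  have "J k < d^2" "t k < d" "s k < d" using k assms(2,4,3) cfgs_lt by blast+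
  then show "lam (J k) (t k) (s k) = cnj (lam (J k) (s k) (t k))"
    by (rule lam_herm[OF assms(1)])
qed

lemma sum_prod_cfgs:
  fixes f :: "nat \<Rightarrow> nat \<Rightarrow> 'a::comm_semiring_1"
  assumes "finite B"
  shows "(\<Sum>s\<in>cfgs d B. \<Prod>k\<in>B. f k (s k)) = (\<Prod>k\<in>B. \<Sum>a<d. f k a)"
  unfolding cfgs_def by (rule sym, rule prod_sum_PiE[OF assms]) simp

lemma Lam_orth:
  assumes "op_basis d lam" "finite B" "J \<in> cfgs (d^2) B" "J' \<in> cfgs (d^2) B"
  shows "(\<Sum>s\<in>cfgs d B. \<Sum>t\<in>cfgs d B. Lam lam B J s t * Lam lam B J' t s)
     = (if J = J' then of_nat d ^ card B else 0)"
proof -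
  have "(\<Sum>s\<in>cfgs d B. \<Sum>t\<in>cfgs d B. Lam lam B J s t * Lam lam B J' t s)
      = (\<Sum>s\<in>cfgs d B. \<Sum>t\<in>cfgs d B. \<Prod>k\<in>B. lam (J k) (s k) (t k) * lam (J' k) (t k) (s k))"
    by (simp add: Lam_def prod.distrib)
  also have "\<dots> = (\<Sum>s\<in>cfgs d B. \<Prod>k\<in>B. \<Sum>b<d. lam (J k) (s k) b * lam (J' k) b (s k))"
    by (rule sum.cong[OF refl], rule sum_prod_cfgs[OF assms(2)])
  also have "\<dots> = (\<Prod>k\<in>B. \<Sum>a<d. \<Sum>b<d. lam (J k) a b * lam (J' k) b a)"
    by (rule sum_prod_cfgs[OF assms(2), where f="\<lambda>k a. \<Sum>b<d. lam (J k) a b * lam (J' k) b a"])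
  also have "\<dots> = (\<Prod>k\<in>B. if J k = J' k then of_nat d else 0)"
    by (rule prod.cong[OF refl], rule lam_orth[OF assms(1)]) (use assms cfgs_lt in auto)
  also have "\<dots> = (if J = J' then of_nat d ^ card B else 0)"
  proof (cases "J = J'")
    case True thus ?thesis by simp
  next
    case False
    then obtain k where "k \<in> B" "J k \<noteq> J' k" using cfgs_eqI[OF assms(3,4)] by blast
    then have "\<exists>k\<in>B. (if J k = J' k then of_nat d else 0) = (0::complex)" by auto
    from prod_zero[OF assms(2) this] show ?thesis using False by simp
  qed
  finally show ?thesis .
qed

lemma Lam_zero:
  assumes "op_basis d lam" "finite B" "\<And>k. k \<in> B \<Longrightarrow> J k = 0" "s \<in> cfgs d B" "t \<in> cfgs d B"
  shows "Lam lam B J s t = (if s = t then 1 else 0)"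
proof -
  have "Lam lam B J s t = (\<Prod>k\<in>B. if s k = t k then 1 else 0)"
    unfolding Lam_def
  proof (rule prod.cong[OF refl])
    fix k assume k: "k \<in> B"
    have "s k < d" "t k < d" using k assms(4,5) cfgs_lt by auto
    then show "lam (J k) (s k) (t k) = (if s k = t k then 1 else 0)"
      using lam0[OF assms(1)] assms(3)[OF k] by simp
  qed
  also have "\<dots> = (if s = t then 1 else 0)"
  proof (cases "s = t")
    case True thus ?thesis by simp
  next
    case False
    then obtain k where "k \<in> B" "s k \<noteq> t k" using cfgs_eqI[OF assms(4,5)] by blast
    then have "\<exists>k\<in>B. (if s k = t k then 1 else 0) = (0::complex)" by auto
    from prod_zero[OF assms(2) this] show ?thesis using False by simp
  qed
  finally show ?thesis .
qed

lemma FF_zero: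
  assumes "op_basis d lam" "finite B" "\<And>k. k \<in> B \<Longrightarrow> J k = 0"
  shows "FF d lam B v J = (\<Sum>s\<in>cfgs d B. complex_of_real ((cmod (v s))^2))"
proof -
  have "FF d lam B v J = (\<Sum>s\<in>cfgs d B. \<Sum>t\<in>cfgs d B. if t = s then v s * cnj (v t) else 0)"
    unfolding FF_def by (intro sum.cong refl) (simp add: Lam_zero[OF assms])
  also have "\<dots> = (\<Sum>s\<in>cfgs d B. v s * cnj (v s))"
    using assms(2) by (intro sum.cong refl) (simp add: sum.delta)
  also have "\<dots> = (\<Sum>s\<in>cfgs d B. complex_of_real ((cmod (v s))^2))"
    by (intro sum.cong refl) (rule complex_norm_square[symmetric])
  finally show ?thesis .
qed

definition Full :: "nat \<Rightarrow> (nat \<Rightarrow> nat \<Rightarrow> nat \<Rightarrow> complex) \<Rightarrow> nat set \<Rightarrow> op \<Rightarrow> (nat \<Rightarrow> nat) \<Rightarrow> complex" where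
  "Full d lam B \<rho> J = (\<Sum>S\<in>cfgs d B. \<Sum>T\<in>cfgs d B. \<rho> S T * Lam lam B J T S)"

lemma Lam_union:
  "finite A \<Longrightarrow> finite C \<Longrightarrow> A \<inter> C = {} \<Longrightarrow> Lam lam (A \<union> C) J T S = Lam lam A J T S * Lam lam C J T S"
  by (simp add: Lam_def prod.union_disjoint)

lemma Lam_merge1: "Lam lam A J (merge A t w) (merge A s u) = Lam lam A J t s"
  unfolding Lam_def by (rule prod.cong) (auto simp: merge_def)

lemma Lam_merge2: "A \<inter> C = {} \<Longrightarrow> Lam lam C J (merge A t w) (merge A s u) = Lam lam C J w u"
  unfolding Lam_def by (rule prod.cong) (auto simp: merge_def)

lemma Lam_cong: "(\<And>k. k \<in> A \<Longrightarrow> J k = J' k) \<Longrightarrow> Lam lam A J = Lam lam A J'"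
  unfolding Lam_def by (intro ext prod.cong) auto

lemma expval_full:
  assumes ob: "op_basis d lam" and al: "\<alpha> \<subseteq> {1..n}"
  shows "expval d n lam \<rho> \<alpha> idx = Full d lam {1..n} \<rho> (\<lambda>k. if k \<in> \<alpha> then idx k else 0)"
proof -
  define C where "C = {1..n} - \<alpha>"
  define J where "J = (\<lambda>k. if k \<in> \<alpha> then idx k else (0::nat))"
  have un: "{1..n} = \<alpha> \<union> C" and dj: "\<alpha> \<inter> C = {}" using al by (auto simp: C_def)
  have fa: "finite \<alpha>" using al finite_subset by blast
  have fc: "finite C" by (simp add: C_def)
  have LJ: "Lam lam (\<alpha> \<union> C) J (merge \<alpha> t w) (merge \<alpha> s u) =
      (\<Prod>k\<in>\<alpha>. lam (idx k) (t k) (s k)) * (if w = u then 1 else 0)"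
    if "w \<in> cfgs d C" "u \<in> cfgs d C" for t w s u
  proof -
    have "Lam lam C J w u = (if w = u then 1 else 0)"
      by (rule Lam_zero[OF ob fc _ that]) (use dj in \<open>auto simp: J_def\<close>)
    moreover have "Lam lam \<alpha> J t s = (\<Prod>k\<in>\<alpha>. lam (idx k) (t k) (s k))"
      unfolding Lam_def J_def by (rule prod.cong) auto
    ultimately show ?thesis
      by (simp add: Lam_union[OF fa fc dj] Lam_merge1 Lam_merge2[OF dj])
  qed
  have "Full d lam {1..n} \<rho> J =
     (\<Sum>s\<in>cfgs d \<alpha>. \<Sum>u\<in>cfgs d C. \<Sum>t\<in>cfgs d \<alpha>. \<Sum>w\<in>cfgs d C.
        \<rho> (merge \<alpha> s u) (merge \<alpha> t w) * Lam lam (\<alpha> \<union> C) J (merge \<alpha> t w) (merge \<alpha> s u))"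
    unfolding Full_def un sum_cfgs_split[OF dj] ..
  also have "\<dots> = (\<Sum>s\<in>cfgs d \<alpha>. \<Sum>u\<in>cfgs d C. \<Sum>t\<in>cfgs d \<alpha>. \<Sum>w\<in>cfgs d C.
        if w = u then \<rho> (merge \<alpha> s u) (merge \<alpha> t w) * (\<Prod>k\<in>\<alpha>. lam (idx k) (t k) (s k)) else 0)"
    by (intro sum.cong refl) (simp add: LJ)
  also have "\<dots> = (\<Sum>s\<in>cfgs d \<alpha>. \<Sum>u\<in>cfgs d C. \<Sum>t\<in>cfgs d \<alpha>.
        \<rho> (merge \<alpha> s u) (merge \<alpha> t u) * (\<Prod>k\<in>\<alpha>. lam (idx k) (t k) (s k)))"
    using fc by (intro sum.cong refl) (simp add: sum.delta)
  also have "\<dots> = (\<Sum>s\<in>cfgs d \<alpha>. \<Sum>t\<in>cfgs d \<alpha>. \<Sum>u\<in>cfgs d C.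
        \<rho> (merge \<alpha> s u) (merge \<alpha> t u) * (\<Prod>k\<in>\<alpha>. lam (idx k) (t k) (s k)))"
    by (rule sum.cong[OF refl], rule sum.swap)
  also have "\<dots> = expval d n lam \<rho> \<alpha> idx"
    unfolding expval_def reduced_def C_def[symmetric]
    by (intro sum.cong refl) (simp add: sum_distrib_right)
  finally show ?thesis by (simp add: J_def)
qed

lemma FF_prod:
  assumes fa: "finite A" and fc: "finite C" and dj: "A \<inter> C = {}"
  shows "FF d lam (A \<union> C) (\<lambda>S. \<phi> (restrict S A) * chi (restrict S C)) J
       = FF d lam A \<phi> J * FF d lam C chi J"
proof -
  let ?L1 = "Lam lam A J" and ?L2 = "Lam lam C J"
  have "FF d lam (A \<union> C) (\<lambda>S. \<phi> (restrict S A) * chi (restrict S C)) J =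
     (\<Sum>s\<in>cfgs d A. \<Sum>u\<in>cfgs d C. \<Sum>t\<in>cfgs d A. \<Sum>w\<in>cfgs d C.
       (\<phi> s * cnj (\<phi> t) * ?L1 t s) * (chi u * cnj (chi w) * ?L2 w u))"
    unfolding FF_def sum_cfgs_split[OF dj]
    by (intro sum.cong refl)
       (simp add: restrict_merge1 restrict_merge2[OF _ dj] Lam_union[OF fa fc dj] Lam_merge1 Lam_merge2[OF dj] mult_ac)
  also have "\<dots> = (\<Sum>s\<in>cfgs d A. \<Sum>t\<in>cfgs d A. \<Sum>u\<in>cfgs d C. \<Sum>w\<in>cfgs d C.
       (\<phi> s * cnj (\<phi> t) * ?L1 t s) * (chi u * cnj (chi w) * ?L2 w u))"
    by (rule sum.cong[OF refl], rule sum.swap)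
  also have "\<dots> = FF d lam A \<phi> J * FF d lam C chi J"
    unfolding FF_def by (simp only: sum_distrib_right) (simp only: sum_distrib_left)
  finally show ?thesis .
qed

lemma Full_mix:
  assumes "\<forall>S\<in>cfgs d B. \<forall>T\<in>cfgs d B. \<rho> S T = (\<Sum>i<m. complex_of_real (p i) * v i S * cnj (v i T))"
  shows "Full d lam B \<rho> J = (\<Sum>i<m. complex_of_real (p i) * FF d lam B (v i) J)"
proof -
  have "Full d lam B \<rho> J = (\<Sum>S\<in>cfgs d B. \<Sum>T\<in>cfgs d B. \<Sum>i<m.
      complex_of_real (p i) * (v i S * cnj (v i T) * Lam lam B J T S))"
    unfolding Full_def using assms by (intro sum.cong refl) (simp add: sum_distrib_right mult.assoc)
  also have "\<dots> = (\<Sum>S\<in>cfgs d B. \<Sum>i<m. \<Sum>T\<in>cfgs d B.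
      complex_of_real (p i) * (v i S * cnj (v i T) * Lam lam B J T S))"
    by (rule sum.cong[OF refl], rule sum.swap)
  also have "\<dots> = (\<Sum>i<m. \<Sum>S\<in>cfgs d B. \<Sum>T\<in>cfgs d B.
      complex_of_real (p i) * (v i S * cnj (v i T) * Lam lam B J T S))"
    by (rule sum.swap)
  also have "\<dots> = (\<Sum>i<m. complex_of_real (p i) * FF d lam B (v i) J)"
    unfolding FF_def by (simp only: sum_distrib_left)
  finally show ?thesis .
qed

lemma sum_swap3:
  "(\<Sum>a\<in>A. \<Sum>b\<in>B. \<Sum>c\<in>C. f a b c) = (\<Sum>c\<in>C. \<Sum>a\<in>A. \<Sum>b\<in>B. f a b c)"
proof -
  have "(\<Sum>a\<in>A. \<Sum>b\<in>B. \<Sum>c\<in>C. f a b c) = (\<Sum>a\<in>A. \<Sum>c\<in>C. \<Sum>b\<in>B. f a b c)"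
    by (rule sum.cong[OF refl], rule sum.swap)
  also have "\<dots> = (\<Sum>c\<in>C. \<Sum>a\<in>A. \<Sum>b\<in>B. f a b c)"
    by (rule sum.swap)
  finally show ?thesis .
qed

lemma sum_swap4:
  "(\<Sum>a\<in>A. \<Sum>b\<in>B. \<Sum>c\<in>C. \<Sum>e\<in>E. f a b c e) = (\<Sum>c\<in>C. \<Sum>e\<in>E. \<Sum>a\<in>A. \<Sum>b\<in>B. f a b c e)"
proof -
  have "(\<Sum>a\<in>A. \<Sum>b\<in>B. \<Sum>c\<in>C. \<Sum>e\<in>E. f a b c e) = (\<Sum>a\<in>A. \<Sum>c\<in>C. \<Sum>e\<in>E. \<Sum>b\<in>B. f a b c e)"
    by (rule sum.cong[OF refl], rule sum_swap3[symmetric])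
  also have "\<dots> = (\<Sum>c\<in>C. \<Sum>e\<in>E. \<Sum>a\<in>A. \<Sum>b\<in>B. f a b c e)"
    by (rule sum_swap3[symmetric])
  finally show ?thesis .
qed

lemma normsq: "complex_of_real ((cmod z)^2) = z * cnj z"
  by (rule complex_norm_square)

lemma bessel:
  assumes ob: "op_basis d lam" and fB: "finite B" and d1: "d \<ge> 1"
    and nv: "(\<Sum>s\<in>cfgs d B. (cmod (v s))^2) = 1"
  shows "(\<Sum>J\<in>cfgs (d^2) B. (cmod (FF d lam B v J))^2) \<le> real d ^ card B"
proof -
  define JJ where "JJ = cfgs (d^2) B"
  define CB where "CB = cfgs d B"
  define F where "F = FF d lam B v"
  define L where "L = Lam lam B"
  define N :: real where "N = real d ^ card B"
  define P where "P = (\<lambda>s t. v s * cnj (v t))"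
  define X where "X = (\<lambda>s t. \<Sum>J\<in>JJ. F J * L J s t)"
  define Sm where "Sm = (\<Sum>J\<in>JJ. (cmod (F J))^2)"
  have fJJ: "finite JJ" and fCB: "finite CB" unfolding JJ_def CB_def using fB by simp_all
  have herm: "L J t s = cnj (L J s t)" if "J \<in> JJ" "s \<in> CB" "t \<in> CB" for J s t
    using Lam_herm[OF ob] that unfolding L_def JJ_def CB_def by blast
  have orth: "(\<Sum>s\<in>CB. \<Sum>t\<in>CB. L J s t * L J' t s) = (if J = J' then complex_of_real N else 0)"
    if "J \<in> JJ" "J' \<in> JJ" for J J'
    using Lam_orth[OF ob fB, of J J'] that by (simp add: L_def JJ_def CB_def N_def)
  have Fdef: "F J = (\<Sum>s\<in>CB. \<Sum>t\<in>CB. P s t * L J t s)" for J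
    by (simp add: F_def FF_def P_def L_def CB_def)
  have cX: "cnj (X s t) = (\<Sum>J\<in>JJ. cnj (F J) * L J t s)" if "s \<in> CB" "t \<in> CB" for s t
    unfolding X_def cnj_sum by (intro sum.cong refl) (simp add: herm[symmetric] that)
  have e1: "(\<Sum>s\<in>CB. \<Sum>t\<in>CB. P s t * cnj (X s t)) = complex_of_real Sm"
  proof -
    have "(\<Sum>s\<in>CB. \<Sum>t\<in>CB. P s t * cnj (X s t)) = (\<Sum>s\<in>CB. \<Sum>t\<in>CB. \<Sum>J\<in>JJ. cnj (F J) * (P s t * L J t s))"
      by (intro sum.cong refl) (simp add: cX sum_distrib_left mult_ac)
    also have "\<dots> = (\<Sum>J\<in>JJ. \<Sum>s\<in>CB. \<Sum>t\<in>CB. cnj (F J) * (P s t * L J t s))"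
      by (rule sum_swap3)
    also have "\<dots> = (\<Sum>J\<in>JJ. cnj (F J) * F J)"
      by (intro sum.cong refl) (simp add: Fdef sum_distrib_left)
    also have "\<dots> = complex_of_real Sm"
      unfolding Sm_def of_real_sum
      by (intro sum.cong refl) (simp add: normsq mult.commute del: of_real_power)
    finally show ?thesis .
  qed
  have e4: "(\<Sum>s\<in>CB. \<Sum>t\<in>CB. X s t * cnj (P s t)) = complex_of_real Sm"
  proof -
    have "(\<Sum>s\<in>CB. \<Sum>t\<in>CB. X s t * cnj (P s t)) = cnj (\<Sum>s\<in>CB. \<Sum>t\<in>CB. P s t * cnj (X s t))"
      by (simp add: mult.commute)
    then show ?thesis using e1 by simp
  qed
  have e3: "(\<Sum>s\<in>CB. \<Sum>t\<in>CB. P s t * cnj (P s t)) = 1"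
  proof -
    have "(\<Sum>s\<in>CB. \<Sum>t\<in>CB. P s t * cnj (P s t)) =
        (\<Sum>s\<in>CB. \<Sum>t\<in>CB. complex_of_real ((cmod (v s))^2) * complex_of_real ((cmod (v t))^2))"
      by (intro sum.cong refl) (simp add: P_def normsq mult_ac del: of_real_power)
    also have "\<dots> = complex_of_real ((\<Sum>s\<in>CB. (cmod (v s))^2) * (\<Sum>t\<in>CB. (cmod (v t))^2))"
      by (simp add: sum_product)
    also have "\<dots> = 1" using nv by (simp add: CB_def)
    finally show ?thesis .
  qed
  have e2: "(\<Sum>s\<in>CB. \<Sum>t\<in>CB. X s t * cnj (X s t)) = complex_of_real N * complex_of_real Sm"
  proof -
    have "(\<Sum>s\<in>CB. \<Sum>t\<in>CB. X s t * cnj (X s t)) =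
        (\<Sum>s\<in>CB. \<Sum>t\<in>CB. \<Sum>J\<in>JJ. \<Sum>J'\<in>JJ. F J * cnj (F J') * (L J s t * L J' t s))"
    proof (intro sum.cong refl)
      fix s t assume st: "s \<in> CB" "t \<in> CB"
      show "X s t * cnj (X s t) = (\<Sum>J\<in>JJ. \<Sum>J'\<in>JJ. F J * cnj (F J') * (L J s t * L J' t s))"
        unfolding cX[OF st] unfolding X_def sum_product by (simp add: mult_ac)
    qed
    also have "\<dots> = (\<Sum>J\<in>JJ. \<Sum>J'\<in>JJ. \<Sum>s\<in>CB. \<Sum>t\<in>CB. F J * cnj (F J') * (L J s t * L J' t s))"
      by (rule sum_swap4)
    also have "\<dots> = (\<Sum>J\<in>JJ. \<Sum>J'\<in>JJ. F J * cnj (F J') * (if J = J' then complex_of_real N else 0))"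
      by (intro sum.cong refl) (simp add: sum_distrib_left[symmetric] orth)
    also have "\<dots> = (\<Sum>J\<in>JJ. F J * cnj (F J) * complex_of_real N)"
      using fJJ by (intro sum.cong refl) (simp add: if_distrib sum.delta cong: if_cong)
    also have "\<dots> = complex_of_real N * complex_of_real Sm"
      unfolding Sm_def of_real_sum sum_distrib_left
      by (intro sum.cong refl) (simp add: normsq mult_ac del: of_real_power)
    finally show ?thesis .
  qed
  define R where "R = (\<lambda>s t. complex_of_real N * P s t - X s t)"
  have "complex_of_real (\<Sum>s\<in>CB. \<Sum>t\<in>CB. (cmod (R s t))^2) =
      (\<Sum>s\<in>CB. \<Sum>t\<in>CB. R s t * cnj (R s t))"
    unfolding of_real_sum by (intro sum.cong refl) (simp add: normsq del: of_real_power)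
  also have "\<dots> = (\<Sum>s\<in>CB. \<Sum>t\<in>CB.
      complex_of_real N * complex_of_real N * (P s t * cnj (P s t))
      - complex_of_real N * (P s t * cnj (X s t)) - complex_of_real N * (X s t * cnj (P s t))
      + X s t * cnj (X s t))"
    by (intro sum.cong refl) (simp add: R_def algebra_simps)
  also have "\<dots> = complex_of_real N * complex_of_real N * 1 - complex_of_real N * complex_of_real Sm
      - complex_of_real N * complex_of_real Sm + complex_of_real N * complex_of_real Sm"
    by (simp add: sum.distrib sum_subtractf sum_distrib_left[symmetric] e1 e2 e3 e4)
  also have "\<dots> = complex_of_real (N * N - N * Sm)"
    by simp
  finally have eq: "(\<Sum>s\<in>CB. \<Sum>t\<in>CB. (cmod (R s t))^2) = N * N - N * Sm"
    by (simp only: of_real_eq_iff)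
  have "0 \<le> (\<Sum>s\<in>CB. \<Sum>t\<in>CB. (cmod (R s t))^2)"
    by (intro sum_nonneg) auto
  then have "N * Sm \<le> N * N" using eq by simp
  moreover have "N > 0" using d1 by (simp add: N_def)
  ultimately have "Sm \<le> N" by simp
  then show ?thesis by (simp add: Sm_def F_def JJ_def N_def)
qed

lemma wjensen:
  fixes p a :: "nat \<Rightarrow> real"
  assumes fi: "finite I" and p0: "\<forall>i\<in>I. p i \<ge> 0" and p1: "sum p I = 1"
  shows "(\<Sum>i\<in>I. p i * a i)^2 \<le> (\<Sum>i\<in>I. p i * (a i)^2)"
proof -
  define M where "M = (\<Sum>i\<in>I. p i * a i)"
  have "0 \<le> (\<Sum>i\<in>I. p i * (a i - M)^2)"
    using p0 by (intro sum_nonneg) auto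
  also have "(\<Sum>i\<in>I. p i * (a i - M)^2) = (\<Sum>i\<in>I. p i * (a i)^2 - 2 * M * (p i * a i) + M^2 * p i)"
    by (intro sum.cong refl) (simp add: power2_diff algebra_simps)
  also have "\<dots> = (\<Sum>i\<in>I. p i * (a i)^2) - 2 * M * M + M^2 * 1"
    by (simp add: sum.distrib sum_subtractf sum_distrib_left[symmetric] M_def p1)
  finally show ?thesis by (simp add: M_def power2_eq_square)
qed

lemma FF_restrict: "FF d lam B v (restrict J B) = FF d lam B v J"
proof -
  have "Lam lam B (restrict J B) = Lam lam B J" by (rule Lam_cong) simp
  then show ?thesis unfolding FF_def by simp
qed

lemma restrict_cfgs: "J \<in> cfgs D A \<Longrightarrow> B \<subseteq> A \<Longrightarrow> restrict J B \<in> cfgs D B"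
  by (auto simp: cfgs_def)

lemma prod_bound:
  fixes x :: int
  assumes ob: "op_basis d lam" and d1: "d \<ge> 1" and f1: "finite B1" and f2: "finite B2"
    and dj: "B1 \<inter> B2 = {}"
    and u1: "(\<Sum>s\<in>cfgs d B1. (cmod (\<phi> s))^2) = 1" and u2: "(\<Sum>s\<in>cfgs d B2. (cmod (chi s))^2) = 1"
  shows "(\<Sum>J\<in>{J \<in> cfgs (d^2) (B1 \<union> B2). {k\<in>B1 \<union> B2. J k \<noteq> 0} \<noteq> {} \<and>
              real_of_int x \<le> real (card {k\<in>B1 \<union> B2. J k \<noteq> 0})}.
          (cmod (FF d lam B1 \<phi> J))^2 * (cmod (FF d lam B2 chi J))^2)
     \<le> (real d ^ card B1 - 1) * (real d ^ card B2 - 1)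
       + (if int (card B1) \<ge> x then real d ^ card B1 - 1 else 0)
       + (if int (card B2) \<ge> x then real d ^ card B2 - 1 else 0)"
proof -
  define Good where "Good = {J \<in> cfgs (d^2) (B1 \<union> B2). {k\<in>B1 \<union> B2. J k \<noteq> 0} \<noteq> {} \<and>
              real_of_int x \<le> real (card {k\<in>B1 \<union> B2. J k \<noteq> 0})}"
  define A1 where "A1 = cfgs (d^2) B1"
  define A2 where "A2 = cfgs (d^2) B2"
  define a where "a = (\<lambda>J. (cmod (FF d lam B1 \<phi> J))^2)"
  define b where "b = (\<lambda>J. (cmod (FF d lam B2 chi J))^2)"
  define z1 where "z1 = restrict (\<lambda>_. 0::nat) B1"
  define z2 where "z2 = restrict (\<lambda>_. 0::nat) B2"
  define f where "f = (\<lambda>(J1, J2). a J1 * b J2)"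
  define h :: "(nat \<Rightarrow> nat) \<Rightarrow> (nat \<Rightarrow> nat) \<times> (nat \<Rightarrow> nat)" where "h = (\<lambda>J. (restrict J B1, restrict J B2))"
  define S1 where "S1 = (\<Sum>J\<in>A1 - {z1}. a J)"
  define S2 where "S2 = (\<Sum>J\<in>A2 - {z2}. b J)"
  define T1 where "T1 = (A1 - {z1}) \<times> (A2 - {z2})"
  define T2 where "T2 = (if x \<le> int (card B1) then (A1 - {z1}) \<times> {z2} else {})"
  define T3 where "T3 = (if x \<le> int (card B2) then {z1} \<times> (A2 - {z2}) else {})"
  have dpos: "0 < d^2" using d1 by simp
  have fA1: "finite A1" and fA2: "finite A2" using f1 f2 by (auto simp: A1_def A2_def)
  have z1A: "z1 \<in> A1" using dpos by (auto simp: z1_def A1_def cfgs_def)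
  have z2A: "z2 \<in> A2" using dpos by (auto simp: z2_def A2_def cfgs_def)
  have a0: "a J \<ge> 0" "b J \<ge> 0" for J by (auto simp: a_def b_def)
  have az: "a z1 = 1"
  proof -
    have "FF d lam B1 \<phi> z1 = (\<Sum>s\<in>cfgs d B1. complex_of_real ((cmod (\<phi> s))^2))"
      by (rule FF_zero[OF ob f1]) (simp add: z1_def)
    also have "\<dots> = 1" unfolding of_real_sum[symmetric] u1 by simp
    finally show ?thesis by (simp add: a_def)
  qed
  have bz: "b z2 = 1"
  proof -
    have "FF d lam B2 chi z2 = (\<Sum>s\<in>cfgs d B2. complex_of_real ((cmod (chi s))^2))"
      by (rule FF_zero[OF ob f2]) (simp add: z2_def)
    also have "\<dots> = 1" unfolding of_real_sum[symmetric] u2 by simp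
    finally show ?thesis by (simp add: b_def)
  qed
  have S1b: "S1 \<le> real d ^ card B1 - 1"
  proof -
    have "sum a A1 = a z1 + S1" unfolding S1_def using sum.remove[OF fA1 z1A] by simp
    moreover have "sum a A1 \<le> real d ^ card B1"
      using bessel[OF ob f1 d1 u1] by (simp add: a_def A1_def)
    ultimately show ?thesis using az by simp
  qed
  have S2b: "S2 \<le> real d ^ card B2 - 1"
  proof -
    have "sum b A2 = b z2 + S2" unfolding S2_def using sum.remove[OF fA2 z2A] by simp
    moreover have "sum b A2 \<le> real d ^ card B2"
      using bessel[OF ob f2 d1 u2] by (simp add: b_def A2_def)
    ultimately show ?thesis using bz by simp
  qed
  have S10: "S1 \<ge> 0" "S2 \<ge> 0" unfolding S1_def S2_def using a0 by (auto intro: sum_nonneg)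
  have inj: "inj_on h Good"
  proof (rule inj_onI)
    fix J J' assume J: "J \<in> Good" "J' \<in> Good" and e: "h J = h J'"
    have e1: "restrict J B1 = restrict J' B1" and e2: "restrict J B2 = restrict J' B2"
      using e by (auto simp: h_def)
    show "J = J'"
    proof (rule cfgs_eqI)
      show "J \<in> cfgs (d^2) (B1 \<union> B2)" "J' \<in> cfgs (d^2) (B1 \<union> B2)" using J by (auto simp: Good_def)
      fix k assume "k \<in> B1 \<union> B2"
      then show "J k = J' k"
      proof
        assume "k \<in> B1" then show ?thesis using fun_cong[OF e1, of k] by simp
      next
        assume "k \<in> B2" then show ?thesis using fun_cong[OF e2, of k] by simp
      qed
    qed
  qed
  have sub: "h ` Good \<subseteq> T1 \<union> T2 \<union> T3"
  proof
    fix q assume "q \<in> h ` Good"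
    then obtain J where J: "J \<in> Good" and q: "q = h J" by blast
    have Jc: "J \<in> cfgs (d^2) (B1 \<union> B2)" using J by (simp add: Good_def)
    define J1 where "J1 = restrict J B1"
    define J2 where "J2 = restrict J B2"
    have q': "q = (J1, J2)" by (simp add: q h_def J1_def J2_def)
    have J1A: "J1 \<in> A1" unfolding J1_def A1_def by (rule restrict_cfgs[OF Jc]) auto
    have J2A: "J2 \<in> A2" unfolding J2_def A2_def by (rule restrict_cfgs[OF Jc]) auto
    have ne: "{k\<in>B1 \<union> B2. J k \<noteq> 0} \<noteq> {}" and cx: "real_of_int x \<le> real (card {k\<in>B1 \<union> B2. J k \<noteq> 0})"
      using J by (auto simp: Good_def)
    have z1e: "J k = 0" if "J1 = z1" "k \<in> B1" for k
    proof -
      have "J1 k = z1 k" using that(1) by simp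
      then show ?thesis using that(2) by (simp add: J1_def z1_def)
    qed
    have z2e: "J k = 0" if "J2 = z2" "k \<in> B2" for k
    proof -
      have "J2 k = z2 k" using that(1) by simp
      then show ?thesis using that(2) by (simp add: J2_def z2_def)
    qed
    show "q \<in> T1 \<union> T2 \<union> T3"
    proof (cases "J1 = z1")
      case True
      show ?thesis
      proof (cases "J2 = z2")
        case True2: True
        then have "{k\<in>B1 \<union> B2. J k \<noteq> 0} = {}" using z1e[OF True] z2e[OF True2] by auto
        then show ?thesis using ne by simp
      next
        case False
        have "{k\<in>B1 \<union> B2. J k \<noteq> 0} \<subseteq> B2" using z1e[OF True] by auto
        then have "card {k\<in>B1 \<union> B2. J k \<noteq> 0} \<le> card B2" using f2 by (rule card_mono[rotated])
        then have "x \<le> int (card B2)" using cx by linarith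
        then show ?thesis using True False J2A by (simp add: q' T3_def)
      qed
    next
      case False
      show ?thesis
      proof (cases "J2 = z2")
        case True2: True
        have "{k\<in>B1 \<union> B2. J k \<noteq> 0} \<subseteq> B1" using z2e[OF True2] by auto
        then have "card {k\<in>B1 \<union> B2. J k \<noteq> 0} \<le> card B1" using f1 by (rule card_mono[rotated])
        then have "x \<le> int (card B1)" using cx by linarith
        then show ?thesis using True2 False J1A by (simp add: q' T2_def)
      next
        case False2: False
        then show ?thesis using False J1A J2A by (simp add: q' T1_def)
      qed
    qed
  qed
  have fT: "finite (T1 \<union> T2 \<union> T3)" using fA1 fA2 by (auto simp: T1_def T2_def T3_def)
  have "(\<Sum>J\<in>Good. (cmod (FF d lam B1 \<phi> J))^2 * (cmod (FF d lam B2 chi J))^2) = (\<Sum>J\<in>Good. f (h J))"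
    by (intro sum.cong refl) (simp add: f_def h_def a_def b_def FF_restrict)
  also have "\<dots> = sum f (h ` Good)" by (simp add: sum.reindex[OF inj])
  also have "\<dots> \<le> sum f (T1 \<union> T2 \<union> T3)"
    by (rule sum_mono2[OF fT sub]) (auto simp: f_def intro: mult_nonneg_nonneg a0)
  also have "\<dots> = sum f T1 + sum f T2 + sum f T3"
  proof -
    have d12: "T1 \<inter> T2 = {}" by (auto simp: T1_def T2_def)
    have d3: "(T1 \<union> T2) \<inter> T3 = {}" by (auto simp: T1_def T2_def T3_def)
    have fT1: "finite T1" "finite T2" "finite T3" using fT by auto
    have "sum f (T1 \<union> T2 \<union> T3) = sum f (T1 \<union> T2) + sum f T3"
      by (rule sum.union_disjoint) (use fT1 d3 in auto)
    also have "sum f (T1 \<union> T2) = sum f T1 + sum f T2"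
      by (rule sum.union_disjoint) (use fT1 d12 in auto)
    finally show ?thesis .
  qed
  also have "sum f T1 = S1 * S2"
    unfolding T1_def S1_def S2_def f_def sum_product sum.cartesian_product by simp
  also have "sum f T2 = (if x \<le> int (card B1) then S1 else 0)"
    unfolding T2_def S1_def f_def using bz by (simp add: sum.cartesian_product[symmetric])
  also have "sum f T3 = (if x \<le> int (card B2) then S2 else 0)"
    unfolding T3_def S2_def f_def using az by (simp add: sum.cartesian_product[symmetric])
  also have "S1 * S2 + (if x \<le> int (card B1) then S1 else 0) + (if x \<le> int (card B2) then S2 else 0)
     \<le> (real d ^ card B1 - 1) * (real d ^ card B2 - 1)
       + (if int (card B1) \<ge> x then real d ^ card B1 - 1 else 0)
       + (if int (card B2) \<ge> x then real d ^ card B2 - 1 else 0)"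
    using mult_mono[OF S1b S2b _ S10(2)] S1b S2b S10 by (intro add_mono) auto
  finally show ?thesis unfolding Good_def .
qed

lemma Full_cong: "(\<And>k. k \<in> B \<Longrightarrow> J k = J' k) \<Longrightarrow> Full d lam B \<rho> J = Full d lam B \<rho> J'"
  unfolding Full_def using Lam_cong[of B J J' lam] by simp

lemma Cx_reindex:
  fixes x :: int
  assumes ob: "op_basis d lam" and d1: "d \<ge> 1"
  shows "C_x d n lam (real_of_int x) \<rho> =
    (\<Sum>J\<in>{J \<in> cfgs (d^2) {1..n}. {k\<in>{1..n}. J k \<noteq> 0} \<noteq> {} \<and>
              real_of_int x \<le> real (card {k\<in>{1..n}. J k \<noteq> 0})}. (Re (Full d lam {1..n} \<rho> J))^2)"
proof -
  define Nn where "Nn = {1..n}"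
  define Good where "Good = {J \<in> cfgs (d^2) Nn. {k\<in>Nn. J k \<noteq> 0} \<noteq> {} \<and>
              real_of_int x \<le> real (card {k\<in>Nn. J k \<noteq> 0})}"
  define AS where "AS = {\<alpha>. \<alpha> \<subseteq> Nn \<and> \<alpha> \<noteq> {} \<and> real (card \<alpha>) \<ge> real_of_int x}"
  define IX where "IX = (\<lambda>\<alpha>::nat set. \<alpha> \<rightarrow>\<^sub>E {1..<d^2})"
  define G where "G = (\<lambda>J. (Re (Full d lam Nn \<rho> J))^2)"
  define ext :: "nat set \<Rightarrow> (nat \<Rightarrow> nat) \<Rightarrow> nat \<Rightarrow> nat"
    where "ext = (\<lambda>\<alpha> idx k. if k \<in> \<alpha> then idx k else if k \<in> Nn then 0 else undefined)"
  define sp where "sp = (\<lambda>J::nat\<Rightarrow>nat. {k\<in>Nn. J k \<noteq> 0})"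
  have fN: "finite Nn" by (simp add: Nn_def)
  have fAS: "finite AS" using fN by (auto simp: AS_def intro: finite_subset[of _ "Pow Nn"])
  have fIX: "finite (IX \<alpha>)" if "\<alpha> \<in> AS" for \<alpha>
    using that fN by (auto simp: AS_def IX_def intro!: finite_PiE dest: finite_subset)
  have "C_x d n lam (real_of_int x) \<rho> = (\<Sum>\<alpha>\<in>AS. \<Sum>idx\<in>IX \<alpha>. (Re (expval d n lam \<rho> \<alpha> idx))^2)"
    unfolding C_x_def tau_norm_sq_def AS_def IX_def Nn_def by simp
  also have "\<dots> = (\<Sum>\<alpha>\<in>AS. \<Sum>idx\<in>IX \<alpha>. G (ext \<alpha> idx))"
  proof (intro sum.cong refl)
    fix \<alpha> idx assume a: "\<alpha> \<in> AS" and i: "idx \<in> IX \<alpha>"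
    have al: "\<alpha> \<subseteq> {1..n}" using a by (simp add: AS_def Nn_def)
    have "expval d n lam \<rho> \<alpha> idx = Full d lam {1..n} \<rho> (\<lambda>k. if k \<in> \<alpha> then idx k else 0)"
      by (rule expval_full[OF ob al])
    also have "\<dots> = Full d lam Nn \<rho> (ext \<alpha> idx)"
      unfolding Nn_def by (rule Full_cong) (simp add: ext_def Nn_def)
    finally show "(Re (expval d n lam \<rho> \<alpha> idx))^2 = G (ext \<alpha> idx)" by (simp add: G_def)
  qed
  also have "\<dots> = (\<Sum>q\<in>Sigma AS IX. G (ext (fst q) (snd q)))"
    by (subst sum.Sigma[OF fAS]) (auto simp: fIX case_prod_unfold)
  also have "\<dots> = sum G Good"
  proof (rule sum.reindex_bij_betw)
    show "bij_betw (\<lambda>q. ext (fst q) (snd q)) (Sigma AS IX) Good"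
    proof (rule bij_betw_byWitness[where f'="\<lambda>J. (sp J, restrict J (sp J))"])
      show "\<forall>q\<in>Sigma AS IX. (sp (ext (fst q) (snd q)), restrict (ext (fst q) (snd q)) (sp (ext (fst q) (snd q)))) = q"
      proof
        fix q assume q: "q \<in> Sigma AS IX"
        obtain \<alpha> idx where qe: "q = (\<alpha>, idx)" by (cases q)
        have a: "\<alpha> \<in> AS" and i: "idx \<in> \<alpha> \<rightarrow>\<^sub>E {1..<d^2}" using q by (auto simp: qe IX_def)
        have al: "\<alpha> \<subseteq> Nn" using a by (simp add: AS_def)
        have spe: "sp (ext \<alpha> idx) = \<alpha>"
        proof -
          have "idx k \<noteq> 0" if "k \<in> \<alpha>" for k using i that by (auto simp: PiE_def Pi_def)
          then show ?thesis using al by (auto simp: sp_def ext_def)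
        qed
        have "restrict (ext \<alpha> idx) \<alpha> = idx"
          using i by (auto simp: ext_def PiE_def extensional_def fun_eq_iff)
        then show "(sp (ext (fst q) (snd q)), restrict (ext (fst q) (snd q)) (sp (ext (fst q) (snd q)))) = q"
          using spe by (simp add: qe)
      qed
      show "\<forall>J\<in>Good. ext (fst (sp J, restrict J (sp J))) (snd (sp J, restrict J (sp J))) = J"
      proof
        fix J assume J: "J \<in> Good"
        then have Jc: "J \<in> Nn \<rightarrow>\<^sub>E {..<d^2}" by (simp add: Good_def cfgs_def)
        show "ext (fst (sp J, restrict J (sp J))) (snd (sp J, restrict J (sp J))) = J"
        proof
          fix k show "ext (fst (sp J, restrict J (sp J))) (snd (sp J, restrict J (sp J))) k = J k"
            using Jc by (cases "k \<in> Nn") (auto simp: ext_def sp_def PiE_def extensional_def)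
        qed
      qed
      show "(\<lambda>q. ext (fst q) (snd q)) ` Sigma AS IX \<subseteq> Good"
      proof
        fix J assume "J \<in> (\<lambda>q. ext (fst q) (snd q)) ` Sigma AS IX"
        then obtain \<alpha> idx where a: "\<alpha> \<in> AS" and i: "idx \<in> \<alpha> \<rightarrow>\<^sub>E {1..<d^2}" and Je: "J = ext \<alpha> idx"
          by (auto simp: IX_def)
        have al: "\<alpha> \<subseteq> Nn" using a by (simp add: AS_def)
        have spe: "{k\<in>Nn. J k \<noteq> 0} = \<alpha>"
        proof -
          have "idx k \<noteq> 0" if "k \<in> \<alpha>" for k using i that by (auto simp: PiE_def Pi_def)
          then show ?thesis using al by (auto simp: Je ext_def)
        qed
        have dp: "0 < d^2" using d1 by simp
        have cj: "J \<in> cfgs (d^2) Nn"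
          using i dp al by (auto simp: Je ext_def cfgs_def PiE_def Pi_def extensional_def)
        have "J \<in> cfgs (d^2) Nn \<and> {k\<in>Nn. J k \<noteq> 0} \<noteq> {} \<and> real_of_int x \<le> real (card {k\<in>Nn. J k \<noteq> 0})"
          unfolding spe using cj a by (simp add: AS_def)
        then show "J \<in> Good" unfolding Good_def by blast
      qed
      show "(\<lambda>J. (sp J, restrict J (sp J))) ` Good \<subseteq> Sigma AS IX"
      proof
        fix q assume "q \<in> (\<lambda>J. (sp J, restrict J (sp J))) ` Good"
        then obtain J where J: "J \<in> Good" and qe: "q = (sp J, restrict J (sp J))" by blast
        have Jc: "J \<in> Nn \<rightarrow>\<^sub>E {..<d^2}" using J by (simp add: Good_def cfgs_def)
        have "sp J \<in> AS" using J by (auto simp: AS_def Good_def sp_def)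
        moreover have "restrict J (sp J) \<in> IX (sp J)"
          using Jc by (auto simp: IX_def sp_def PiE_def Pi_def)
        ultimately show "q \<in> Sigma AS IX" by (simp add: qe)
      qed
    qed
  qed
  finally show ?thesis by (simp add: G_def Good_def Nn_def)
qed

lemma Re_sq_le: "(Re z)^2 \<le> (cmod z)^2"
  using abs_Re_le_cmod[of z] by (metis abs_ge_zero power2_abs power_mono)

theorem theorem2:
  fixes n d :: nat and \<beta> :: "nat set" and x :: int
    and lam :: "nat \<Rightarrow> nat \<Rightarrow> nat \<Rightarrow> complex" and \<rho> :: op
  assumes "n \<ge> 2" and "d \<ge> 2"
    and "op_basis d lam"
    and "\<beta> \<subseteq> {1..n}" and "\<beta> \<noteq> {}" and "{1..n} - \<beta> \<noteq> {}"
    and "is_state d n \<rho>" and "separable d n \<beta> \<rho>"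
  shows "C_x d n lam (real_of_int x) \<rho> \<le>
    (real d ^ card \<beta> - 1) * (real d ^ card ({1..n} - \<beta>) - 1)
    + (if int (card \<beta>) \<ge> x then real d ^ card \<beta> - 1 else 0)
    + (if int (card ({1..n} - \<beta>)) \<ge> x then real d ^ card ({1..n} - \<beta>) - 1 else 0)"
proof -
  have ob: "op_basis d lam" and d1: "d \<ge> 1" using assms(2,3) by auto
  obtain m :: nat and p :: "nat \<Rightarrow> real" and \<phi> chi :: "nat \<Rightarrow> cfg \<Rightarrow> complex" where p0: "\<forall>i<m. p i \<ge> 0" and p1: "(\<Sum>i<m. p i) = 1"
    and n1: "\<forall>i<m. (\<Sum>s\<in>cfgs d \<beta>. (cmod (\<phi> i s))^2) = 1"
    and n2: "\<forall>i<m. (\<Sum>s\<in>cfgs d ({1..n} - \<beta>). (cmod (chi i s))^2) = 1"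
    and rho: "\<forall>s\<in>cfgs d {1..n}. \<forall>t\<in>cfgs d {1..n}.
           \<rho> s t = (\<Sum>i<m. complex_of_real (p i) *
              (\<phi> i (restrict s \<beta>) * chi i (restrict s ({1..n} - \<beta>))) *
              cnj (\<phi> i (restrict t \<beta>) * chi i (restrict t ({1..n} - \<beta>))))"
    using assms(8) unfolding separable_def by (elim exE conjE) (rule that; assumption)
  define Bc where "Bc = {1..n} - \<beta>"
  define Nn where "Nn = {1..n}"
  have un: "Nn = \<beta> \<union> Bc" and dj: "\<beta> \<inter> Bc = {}" using assms(4) by (auto simp: Nn_def Bc_def)
  have fb: "finite \<beta>" using assms(4) finite_subset by blast
  have fc: "finite Bc" by (simp add: Bc_def)
  define \<psi> where "\<psi> = (\<lambda>i S. \<phi> i (restrict S \<beta>) * chi i (restrict S Bc))"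
  have rho': "\<forall>S\<in>cfgs d Nn. \<forall>T\<in>cfgs d Nn. \<rho> S T = (\<Sum>i<m. complex_of_real (p i) * \<psi> i S * cnj (\<psi> i T))"
    using rho unfolding \<psi>_def Bc_def Nn_def by simp
  define Good where "Good = {J \<in> cfgs (d^2) Nn. {k\<in>Nn. J k \<noteq> 0} \<noteq> {} \<and>
              real_of_int x \<le> real (card {k\<in>Nn. J k \<noteq> 0})}"
  define a where "a = (\<lambda>i J. (cmod (FF d lam \<beta> (\<phi> i) J))^2 * (cmod (FF d lam Bc (chi i) J))^2)"
  define RHS where "RHS = (real d ^ card \<beta> - 1) * (real d ^ card Bc - 1)
    + (if int (card \<beta>) \<ge> x then real d ^ card \<beta> - 1 else 0)
    + (if int (card Bc) \<ge> x then real d ^ card Bc - 1 else 0)"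
  have Cx: "C_x d n lam (real_of_int x) \<rho> = (\<Sum>J\<in>Good. (Re (Full d lam Nn \<rho> J))^2)"
    unfolding Good_def Nn_def by (rule Cx_reindex[OF ob d1])
  have each: "(Re (Full d lam Nn \<rho> J))^2 \<le> (\<Sum>i<m. p i * a i J)" for J
  proof -
    have "Full d lam Nn \<rho> J = (\<Sum>i<m. complex_of_real (p i) * FF d lam Nn (\<psi> i) J)"
      by (rule Full_mix[OF rho'])
    also have "\<dots> = (\<Sum>i<m. complex_of_real (p i) * (FF d lam \<beta> (\<phi> i) J * FF d lam Bc (chi i) J))"
      unfolding un \<psi>_def by (intro sum.cong refl) (simp add: FF_prod[OF fb fc dj])
    finally have "Re (Full d lam Nn \<rho> J) = (\<Sum>i<m. p i * Re (FF d lam \<beta> (\<phi> i) J * FF d lam Bc (chi i) J))"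
      by simp
    then have "(Re (Full d lam Nn \<rho> J))^2 = (\<Sum>i<m. p i * Re (FF d lam \<beta> (\<phi> i) J * FF d lam Bc (chi i) J))^2"
      by simp
    also have "\<dots> \<le> (\<Sum>i<m. p i * (Re (FF d lam \<beta> (\<phi> i) J * FF d lam Bc (chi i) J))^2)"
      by (rule wjensen) (use p0 p1 in auto)
    also have "\<dots> \<le> (\<Sum>i<m. p i * a i J)"
    proof (rule sum_mono)
      fix i assume "i \<in> {..<m}"
      then have "p i \<ge> 0" using p0 by auto
      moreover have "(Re (FF d lam \<beta> (\<phi> i) J * FF d lam Bc (chi i) J))^2 \<le> a i J"
        using Re_sq_le[of "FF d lam \<beta> (\<phi> i) J * FF d lam Bc (chi i) J"]
        by (simp add: a_def norm_mult power_mult_distrib)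
      ultimately show "p i * (Re (FF d lam \<beta> (\<phi> i) J * FF d lam Bc (chi i) J))^2 \<le> p i * a i J"
        by (rule mult_left_mono[rotated])
    qed
    finally show ?thesis .
  qed
  have bnd: "(\<Sum>J\<in>Good. a i J) \<le> RHS" if "i < m" for i
  proof -
    have "(\<Sum>J\<in>{J \<in> cfgs (d^2) (\<beta> \<union> Bc). {k\<in>\<beta> \<union> Bc. J k \<noteq> 0} \<noteq> {} \<and>
              real_of_int x \<le> real (card {k\<in>\<beta> \<union> Bc. J k \<noteq> 0})}.
          (cmod (FF d lam \<beta> (\<phi> i) J))^2 * (cmod (FF d lam Bc (chi i) J))^2) \<le> RHS"
      unfolding RHS_def
      by (rule prod_bound[OF ob d1 fb fc dj]) (use n1 n2 that in \<open>auto simp: Bc_def\<close>)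
    then show ?thesis unfolding Good_def a_def un .
  qed
  have "C_x d n lam (real_of_int x) \<rho> \<le> (\<Sum>J\<in>Good. \<Sum>i<m. p i * a i J)"
    unfolding Cx by (rule sum_mono) (rule each)
  also have "\<dots> = (\<Sum>i<m. p i * (\<Sum>J\<in>Good. a i J))"
    by (simp add: sum.swap[of _ Good] sum_distrib_left)
  also have "\<dots> \<le> (\<Sum>i<m. p i * RHS)"
    by (rule sum_mono) (use p0 bnd in \<open>auto intro: mult_left_mono\<close>)
  also have "\<dots> = RHS" using p1 by (simp add: sum_distrib_right[symmetric])
  finally have "C_x d n lam (real_of_int x) \<rho> \<le> RHS" .
  then show ?thesis unfolding RHS_def Bc_def .
qed

end
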